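(* Let $\mathcal{T}\in\mathbb{K}^{R\times R\times K}$ be slice mix invertible, let $\mathbf{U}\in\mathbb{K}^{K\times K}$ be invertible, and set $\mathcal{S}=\mathcal{T}\cdot_3\mathbf{U}$ with frontal slices $\mathbf{S}_k=\mathcal{S}(:,:,k)$. If $\mathcal{T}$ has a JGE value of algebraic multiplicity $m$, then for any $i\neq j$ the subpencil $(\mathbf{S}_i,\mathbf{S}_j)$ (viewed as a tensor in $\mathbb{K}^{R\times R\times 2}$) has a JGE value of algebraic multiplicity at least $m$.
   Context: $\mathbb{K}$ denotes $\mathbb{R}$ or $\mathbb{C}$. $\mathcal{T}\cdot_3\mathbf{U}$ is defined by $(\mathcal{T}\cdot_3\mathbf{U})(a,b,:)=\mathbf{U}\,\mathcal{T}(a,b,:)$, i.e. $\mathbf{S}_k=\sum_l U_{kl}\mathbf{T}_l$. For $\mathcal{X}\in\mathbb{K}^{R\times R\times L}$ with slices $\mathbf{X}_k$: slice mix invertible means some linear combination of slices is invertible; $p_{\mathcal{X}}(\boldsymbol{\gamma})=\det(\sum_k\gamma_k\mathbf{X}_k)$; for nonzero $\boldsymbol{\lambda}\in\mathbb{K}^L$ the algebraic multiplicity of $\mathrm{span}(\boldsymbol{\lambda})$ is the largest $m$ with $(\sum_k\lambda_k\gamma_k)^m\mid p_{\mathcal{X}}$, and $\mathrm{span}(\boldsymbol{\lambda})$ is a JGE value (of that algebraic multiplicity) when this is positive. *)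

theory Defs
  imports "HOL-Analysis.Analysis"
begin

text \<open>A tensor in K^{R x R x L} is represented by its frontal slices, a function
  from a finite index type 'l (of cardinality L) to R x R matrices.\<close>

definition slice_mix :: "('l::finite \<Rightarrow> 'a::comm_ring_1^'r^'r) \<Rightarrow> ('l \<Rightarrow> 'a) \<Rightarrow> 'a^'r^'r" where
  "slice_mix X \<gamma> = (\<chi> a b. \<Sum>k\<in>UNIV. \<gamma> k * X k $ a $ b)"

definition slice_mix_invertible :: "('l::finite \<Rightarrow> 'a::comm_ring_1^'r::finite^'r) \<Rightarrow> bool" where
  "slice_mix_invertible X \<longleftrightarrow> (\<exists>\<gamma>. invertible (slice_mix X \<gamma>))"

definition pencil_det :: "('l::finite \<Rightarrow> 'a::comm_ring_1^'r::finite^'r) \<Rightarrow> ('l \<Rightarrow> 'a) \<Rightarrow> 'a" where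
  "pencil_det X \<gamma> = det (slice_mix X \<gamma>)"

definition mpoly_fun :: "(('l::finite \<Rightarrow> 'a::comm_ring_1) \<Rightarrow> 'a) \<Rightarrow> bool" where
  "mpoly_fun q \<longleftrightarrow> (\<exists>c :: ('l \<Rightarrow> nat) \<Rightarrow> 'a. finite {\<alpha>. c \<alpha> \<noteq> 0} \<and>
     (\<forall>\<gamma>. q \<gamma> = (\<Sum>\<alpha>\<in>{\<alpha>. c \<alpha> \<noteq> 0}. c \<alpha> * (\<Prod>k\<in>UNIV. \<gamma> k ^ \<alpha> k))))"

definition lin_pow_dvd :: "('l::finite \<Rightarrow> 'a::comm_ring_1^'r::finite^'r) \<Rightarrow> ('l \<Rightarrow> 'a) \<Rightarrow> nat \<Rightarrow> bool" where
  "lin_pow_dvd X l m \<longleftrightarrow> (\<exists>q. mpoly_fun q \<and>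
     (\<forall>\<gamma>. pencil_det X \<gamma> = (\<Sum>k\<in>UNIV. l k * \<gamma> k) ^ m * q \<gamma>))"

definition alg_mult :: "('l::finite \<Rightarrow> 'a::comm_ring_1^'r::finite^'r) \<Rightarrow> ('l \<Rightarrow> 'a) \<Rightarrow> nat" where
  "alg_mult X l = (GREATEST m. lin_pow_dvd X l m)"

definition is_JGE_value :: "('l::finite \<Rightarrow> 'a::comm_ring_1^'r::finite^'r) \<Rightarrow> ('l \<Rightarrow> 'a) \<Rightarrow> bool" where
  "is_JGE_value X l \<longleftrightarrow> l \<noteq> (\<lambda>_. 0) \<and> alg_mult X l > 0"

definition mode3 :: "('l::finite \<Rightarrow> 'a::comm_ring_1^'r^'r) \<Rightarrow> 'a^'l^'l \<Rightarrow> ('l \<Rightarrow> 'a^'r^'r)" where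
  "mode3 T U = (\<lambda>k. \<chi> a b. \<Sum>l\<in>UNIV. U $ k $ l * T l $ a $ b)"

definition subpencil :: "('l \<Rightarrow> 'a^'r^'r) \<Rightarrow> 'l \<Rightarrow> 'l \<Rightarrow> (bool \<Rightarrow> 'a^'r^'r)" where
  "subpencil S i j = (\<lambda>b. if b then S i else S j)"

end

theory Submission
  imports Defs
begin

definition monf :: "('l \<Rightarrow> nat) \<Rightarrow> ('l::finite \<Rightarrow> 'a::comm_ring_1) \<Rightarrow> 'a" where
  "monf \<alpha> \<gamma> = (\<Prod>k\<in>UNIV. \<gamma> k ^ \<alpha> k)"

lemma mpoly_fun_iff:
  "mpoly_fun q \<longleftrightarrow> (\<exists>A c. finite A \<and> (\<forall>\<gamma>. q \<gamma> = (\<Sum>\<alpha>\<in>A. c \<alpha> * monf \<alpha> \<gamma>)))"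
proof
  assume "mpoly_fun q"
  then show "\<exists>A c. finite A \<and> (\<forall>\<gamma>. q \<gamma> = (\<Sum>\<alpha>\<in>A. c \<alpha> * monf \<alpha> \<gamma>))"
    unfolding mpoly_fun_def monf_def by blast
next
  assume "\<exists>A c. finite A \<and> (\<forall>\<gamma>. q \<gamma> = (\<Sum>\<alpha>\<in>A. c \<alpha> * monf \<alpha> \<gamma>))"
  then obtain A c where A: "finite A" and q: "\<And>\<gamma>. q \<gamma> = (\<Sum>\<alpha>\<in>A. c \<alpha> * monf \<alpha> \<gamma>)" by blast
  define c' where "c' \<alpha> = (if \<alpha> \<in> A then c \<alpha> else 0)" for \<alpha>
  have sub: "{\<alpha>. c' \<alpha> \<noteq> 0} \<subseteq> A" by (auto simp: c'_def split: if_splits)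
  have fin: "finite {\<alpha>. c' \<alpha> \<noteq> 0}" using A sub finite_subset by blast
  have "q \<gamma> = (\<Sum>\<alpha>\<in>{\<alpha>. c' \<alpha> \<noteq> 0}. c' \<alpha> * monf \<alpha> \<gamma>)" for \<gamma>
  proof -
    have "q \<gamma> = (\<Sum>\<alpha>\<in>A. c' \<alpha> * monf \<alpha> \<gamma>)" unfolding q by (rule sum.cong) (auto simp: c'_def)
    also have "\<dots> = (\<Sum>\<alpha>\<in>{\<alpha>. c' \<alpha> \<noteq> 0}. c' \<alpha> * monf \<alpha> \<gamma>)"
      by (rule sum.mono_neutral_right[OF A sub]) auto
    finally show ?thesis .
  qed
  then show "mpoly_fun q" unfolding mpoly_fun_def monf_def using fin by blast
qed

lemma mpoly_gen:
  fixes f :: "'b \<Rightarrow> 'a::comm_ring_1" and g :: "'b \<Rightarrow> ('l::finite \<Rightarrow> nat)"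
  assumes "finite X"
  shows "mpoly_fun (\<lambda>\<gamma>. \<Sum>x\<in>X. f x * monf (g x) \<gamma>)"
proof -
  have "(\<Sum>x\<in>X. f x * monf (g x) \<gamma>) = (\<Sum>\<alpha>\<in>g`X. (\<Sum>x\<in>{x. x \<in> X \<and> g x = \<alpha>}. f x) * monf \<alpha> \<gamma>)" for \<gamma>
  proof -
    have "(\<Sum>x\<in>X. f x * monf (g x) \<gamma>) = (\<Sum>\<alpha>\<in>g`X. \<Sum>x\<in>{x. x \<in> X \<and> g x = \<alpha>}. f x * monf (g x) \<gamma>)"
      by (rule sum.image_gen[OF assms])
    also have "\<dots> = (\<Sum>\<alpha>\<in>g`X. (\<Sum>x\<in>{x. x \<in> X \<and> g x = \<alpha>}. f x) * monf \<alpha> \<gamma>)"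
      by (simp add: sum_distrib_right)
    finally show ?thesis .
  qed
  then show ?thesis unfolding mpoly_fun_iff using assms
    by (intro exI[of _ "g`X"] exI[of _ "\<lambda>\<alpha>. \<Sum>x\<in>{x. x \<in> X \<and> g x = \<alpha>}. f x"]) auto
qed

lemma mpoly_const: "mpoly_fun (\<lambda>\<gamma>::'l::finite \<Rightarrow> 'a::comm_ring_1. a)"
proof -
  have "mpoly_fun (\<lambda>\<gamma>::'l \<Rightarrow> 'a. \<Sum>x\<in>{()}. (\<lambda>_. a) x * monf ((\<lambda>_. (\<lambda>_. 0)) x) \<gamma>)"
    by (rule mpoly_gen) auto
  then show ?thesis by (simp add: monf_def)
qed

lemma mpoly_var: "mpoly_fun (\<lambda>\<gamma>::'l::finite \<Rightarrow> 'a::comm_ring_1. \<gamma> k)"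
proof -
  have "mpoly_fun (\<lambda>\<gamma>::'l \<Rightarrow> 'a. \<Sum>x\<in>{()}. (\<lambda>_. 1) x * monf ((\<lambda>_. (\<lambda>l. if l = k then 1 else 0)) x) \<gamma>)"
    by (rule mpoly_gen) auto
  moreover have "monf (\<lambda>l. if l = k then 1 else 0) \<gamma> = \<gamma> k" for \<gamma> :: "'l \<Rightarrow> 'a"
  proof -
    have "monf (\<lambda>l. if l = k then 1 else 0) \<gamma> = (\<Prod>l\<in>UNIV. if l = k then \<gamma> l else 1)"
      unfolding monf_def by (rule prod.cong) auto
    then show ?thesis by simp
  qed
  ultimately show ?thesis by simp
qed

lemma mpoly_add:
  assumes "mpoly_fun p" "mpoly_fun q"
  shows "mpoly_fun (\<lambda>\<gamma>. p \<gamma> + q \<gamma>)"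
proof -
  obtain A c where A: "finite A" "\<And>\<gamma>. p \<gamma> = (\<Sum>\<alpha>\<in>A. c \<alpha> * monf \<alpha> \<gamma>)"
    using assms(1) unfolding mpoly_fun_iff by blast
  obtain B d where B: "finite B" "\<And>\<gamma>. q \<gamma> = (\<Sum>\<alpha>\<in>B. d \<alpha> * monf \<alpha> \<gamma>)"
    using assms(2) unfolding mpoly_fun_iff by blast
  have "mpoly_fun (\<lambda>\<gamma>. \<Sum>x\<in>A <+> B. (case_sum c d) x * monf (case_sum id id x) \<gamma>)"
    by (rule mpoly_gen) (use A B in auto)
  moreover have "(\<Sum>x\<in>A <+> B. (case_sum c d) x * monf (case_sum id id x) \<gamma>) = p \<gamma> + q \<gamma>" for \<gamma>
    using A B by (simp add: sum.Plus comp_def)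
  ultimately show ?thesis by simp
qed

lemma monf_add: "monf (\<lambda>k. \<alpha> k + \<beta> k) \<gamma> = monf \<alpha> \<gamma> * monf \<beta> \<gamma>"
  unfolding monf_def by (simp add: power_add prod.distrib)

lemma mpoly_mult:
  assumes "mpoly_fun p" "mpoly_fun q"
  shows "mpoly_fun (\<lambda>\<gamma>. p \<gamma> * q \<gamma>)"
proof -
  obtain A c where A: "finite A" "\<And>\<gamma>. p \<gamma> = (\<Sum>\<alpha>\<in>A. c \<alpha> * monf \<alpha> \<gamma>)"
    using assms(1) unfolding mpoly_fun_iff by blast
  obtain B d where B: "finite B" "\<And>\<gamma>. q \<gamma> = (\<Sum>\<alpha>\<in>B. d \<alpha> * monf \<alpha> \<gamma>)"
    using assms(2) unfolding mpoly_fun_iff by blast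
  have "mpoly_fun (\<lambda>\<gamma>. \<Sum>x\<in>A \<times> B. (c (fst x) * d (snd x)) * monf ((\<lambda>x k. fst x k + snd x k) x) \<gamma>)"
    by (rule mpoly_gen) (use A B in auto)
  moreover have "(\<Sum>x\<in>A \<times> B. (c (fst x) * d (snd x)) * monf ((\<lambda>x k. fst x k + snd x k) x) \<gamma>) = p \<gamma> * q \<gamma>" for \<gamma>
  proof -
    have "p \<gamma> * q \<gamma> = (\<Sum>a\<in>A. \<Sum>b\<in>B. (c a * monf a \<gamma>) * (d b * monf b \<gamma>))"
      unfolding A(2) B(2) by (rule sum_product)
    also have "\<dots> = (\<Sum>x\<in>A \<times> B. (c (fst x) * monf (fst x) \<gamma>) * (d (snd x) * monf (snd x) \<gamma>))"
      unfolding sum.cartesian_product by (rule sum.cong) auto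
    finally show ?thesis by (simp add: monf_add mult_ac)
  qed
  ultimately show ?thesis by simp
qed

lemma mpoly_sum:
  assumes "finite I" "\<And>i. i \<in> I \<Longrightarrow> mpoly_fun (f i)"
  shows "mpoly_fun (\<lambda>\<gamma>. \<Sum>i\<in>I. f i \<gamma>)"
  using assms
proof (induction I rule: finite_induct)
  case empty
  then show ?case using mpoly_const[of 0] by simp
next
  case (insert x F)
  then show ?case using mpoly_add[of "f x" "\<lambda>\<gamma>. \<Sum>i\<in>F. f i \<gamma>"] by simp
qed

lemma mpoly_prod:
  assumes "finite I" "\<And>i. i \<in> I \<Longrightarrow> mpoly_fun (f i)"
  shows "mpoly_fun (\<lambda>\<gamma>. \<Prod>i\<in>I. f i \<gamma>)"
  using assms
proof (induction I rule: finite_induct)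
  case empty
  then show ?case using mpoly_const[of 1] by simp
next
  case (insert x F)
  then show ?case using mpoly_mult[of "f x" "\<lambda>\<gamma>. \<Prod>i\<in>F. f i \<gamma>"] by simp
qed

lemma mpoly_power:
  assumes "mpoly_fun p"
  shows "mpoly_fun (\<lambda>\<gamma>. p \<gamma> ^ n)"
proof (induction n)
  case 0
  then show ?case using mpoly_const[of 1] by simp
next
  case (Suc n)
  then show ?case using mpoly_mult[OF assms Suc] by simp
qed

lemma mpoly_subst:
  fixes q :: "('l::finite \<Rightarrow> 'a::comm_ring_1) \<Rightarrow> 'a" and M :: "'l \<Rightarrow> 'm::finite \<Rightarrow> 'a"
  assumes "mpoly_fun q"
  shows "mpoly_fun (\<lambda>\<gamma>. q (\<lambda>k. \<Sum>l\<in>UNIV. M k l * \<gamma> l))"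
proof -
  obtain A c where A: "finite A" "\<And>\<gamma>. q \<gamma> = (\<Sum>\<alpha>\<in>A. c \<alpha> * monf \<alpha> \<gamma>)"
    using assms unfolding mpoly_fun_iff by blast
  have lin: "mpoly_fun (\<lambda>\<gamma>::'m \<Rightarrow> 'a. \<Sum>l\<in>UNIV. M k l * \<gamma> l)" for k
    by (rule mpoly_sum) (auto intro: mpoly_mult mpoly_const mpoly_var)
  have "mpoly_fun (\<lambda>\<gamma>::'m \<Rightarrow> 'a. \<Sum>\<alpha>\<in>A. c \<alpha> * (\<Prod>k\<in>UNIV. (\<Sum>l\<in>UNIV. M k l * \<gamma> l) ^ \<alpha> k))"
    by (rule mpoly_sum[OF A(1)]) (auto intro!: mpoly_mult mpoly_const mpoly_prod mpoly_power lin)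
  then show ?thesis unfolding A(2) monf_def by simp
qed


lemma pencil_mpoly: "mpoly_fun (pencil_det (T :: 'k::finite \<Rightarrow> 'a::comm_ring_1^'r::finite^'r))"
proof -
  have eq: "pencil_det T = (\<lambda>\<gamma>. \<Sum>p\<in>{p. p permutes (UNIV::'r set)}. of_int (sign p) *
     (\<Prod>a\<in>UNIV. \<Sum>k\<in>UNIV. \<gamma> k * T k $ a $ p a))"
    by (rule ext) (simp add: pencil_det_def det_def slice_mix_def)
  show ?thesis unfolding eq
    by (intro mpoly_sum mpoly_mult mpoly_const mpoly_prod mpoly_var finite_permutations) simp_all
qed

lemma det_scale: "det (\<chi> a b. t * (A::'a::comm_ring_1^'r::finite^'r) $ a $ b) = t ^ CARD('r) * det A"
  unfolding det_def
  by (simp add: sum_distrib_left prod.distrib mult_ac)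

lemma lpd_bound:
  fixes T :: "'k::finite \<Rightarrow> 'a::real_normed_field^'r::finite^'r"
  assumes "slice_mix_invertible T" "lin_pow_dvd T l n"
  shows "n \<le> CARD('r)"
proof (rule ccontr)
  assume nR: "\<not> n \<le> CARD('r)"
  let ?R = "CARD('r)"
  obtain \<gamma>0 where "invertible (slice_mix T \<gamma>0)" using assms(1) unfolding slice_mix_invertible_def by blast
  then have d0: "det (slice_mix T \<gamma>0) \<noteq> 0" by (simp add: invertible_det_nz)
  define d where "d = det (slice_mix T \<gamma>0)"
  obtain q where mq: "mpoly_fun q" and eq: "\<And>\<gamma>. pencil_det T \<gamma> = (\<Sum>k\<in>UNIV. l k * \<gamma> k) ^ n * q \<gamma>"
    using assms(2) unfolding lin_pow_dvd_def by blast
  obtain A c where A: "finite A" "\<And>\<gamma>. q \<gamma> = (\<Sum>\<alpha>\<in>A. c \<alpha> * monf \<alpha> \<gamma>)"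
    using mq unfolding mpoly_fun_iff by blast
  define c0 where "c0 = (\<Sum>k\<in>UNIV. l k * \<gamma>0 k)"
  define g where "g t = t ^ (n - ?R) * c0 ^ n * q (\<lambda>k. t * \<gamma>0 k)" for t
  have cont: "isCont g 0"
    unfolding g_def A(2) monf_def by (intro continuous_intros)
  have scale: "slice_mix T (\<lambda>k. t * \<gamma>0 k) = (\<chi> a b. t * slice_mix T \<gamma>0 $ a $ b)" for t
    unfolding slice_mix_def by (simp add: vec_eq_iff sum_distrib_left mult_ac)
  have gt: "g t = d" if t0: "t \<noteq> 0" for t
  proof -
    have "t ^ ?R * d = pencil_det T (\<lambda>k. t * \<gamma>0 k)"
      unfolding pencil_det_def scale det_scale d_def ..
    also have "\<dots> = (t * c0) ^ n * q (\<lambda>k. t * \<gamma>0 k)"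
      unfolding eq c0_def by (simp add: sum_distrib_left mult_ac)
    also have "\<dots> = t ^ ?R * g t"
    proof -
      have "n = ?R + (n - ?R)" using nR by simp
      then have "t ^ n = t ^ ?R * t ^ (n - ?R)" by (metis power_add)
      then show ?thesis unfolding g_def power_mult_distrib by (simp add: mult_ac)
    qed
    finally show ?thesis using t0 by simp
  qed
  have ev: "\<forall>\<^sub>F t in at (0::'a). d = g t" by (auto simp: eventually_at_filter gt)
  have l1: "(g \<longlongrightarrow> d) (at 0)"
    by (rule Lim_transform_eventually[OF tendsto_const ev])
  have l2: "(g \<longlongrightarrow> g 0) (at 0)" using cont by (simp add: isCont_def)
  have "d = g 0" by (rule tendsto_unique[OF _ l1 l2]) simp
  moreover have "g 0 = 0" using nR unfolding g_def by simp
  ultimately show False using d0 d_def by simp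
qed

theorem proposition5p1:
  fixes T :: "'k::finite \<Rightarrow> 'a::real_normed_field^'r::finite^'r"
    and U :: "'a^'k^'k"
    and lam :: "'k \<Rightarrow> 'a"
    and m :: nat and i j :: 'k
  assumes "slice_mix_invertible T"
    and "invertible U"
    and "is_JGE_value T lam" and "alg_mult T lam = m"
    and "i \<noteq> j"
  shows "\<exists>\<mu> :: bool \<Rightarrow> 'a. \<mu> \<noteq> (\<lambda>_. 0) \<and> lin_pow_dvd (subpencil (mode3 T U) i j) \<mu> 1
           \<and> lin_pow_dvd (subpencil (mode3 T U) i j) \<mu> m"
proof -
  have m0: "m > 0" using assms(3,4) unfolding is_JGE_value_def by simp
  have h0: "lin_pow_dvd T lam 0" unfolding lin_pow_dvd_def
    by (intro exI[of _ "pencil_det T"]) (simp add: pencil_mpoly)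
  have "lin_pow_dvd T lam (Greatest (lin_pow_dvd T lam))"
    apply (rule GreatestI_ex_nat[where b="CARD('r)"])
    using h0 apply blast
    using lpd_bound[OF assms(1)] apply blast
    done
  then have "lin_pow_dvd T lam m" using assms(4) unfolding alg_mult_def by simp
  then obtain q where mq: "mpoly_fun q" and eq: "\<And>\<delta>. pencil_det T \<delta> = (\<Sum>k\<in>UNIV. lam k * \<delta> k) ^ m * q \<delta>"
    unfolding lin_pow_dvd_def by blast
  define N :: "'k \<Rightarrow> bool \<Rightarrow> 'a" where "N l b = (if b then U$i$l else U$j$l)" for l b
  define D where "D \<gamma> = (\<lambda>l. \<Sum>b\<in>UNIV. N l b * \<gamma> b)" for \<gamma> :: "bool \<Rightarrow> 'a"
  define \<mu> where "\<mu> b = (\<Sum>l\<in>UNIV. lam l * N l b)" for b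
  let ?S = "subpencil (mode3 T U) i j"
  have key: "pencil_det ?S \<gamma> = pencil_det T (D \<gamma>)" for \<gamma>
  proof -
    have "slice_mix ?S \<gamma> = slice_mix T (D \<gamma>)"
      unfolding slice_mix_def subpencil_def mode3_def D_def N_def
      by (simp add: vec_eq_iff UNIV_bool sum_distrib_left sum.distrib distrib_right mult.assoc mult.left_commute)
    then show ?thesis unfolding pencil_det_def by simp
  qed
  have lin: "(\<Sum>l\<in>UNIV. lam l * D \<gamma> l) = (\<Sum>b\<in>UNIV. \<mu> b * \<gamma> b)" for \<gamma>
    unfolding D_def \<mu>_def
    by (simp add: UNIV_bool distrib_left sum.distrib sum_distrib_left mult_ac)
  have pq: "pencil_det ?S \<gamma> = (\<Sum>b\<in>UNIV. \<mu> b * \<gamma> b) ^ m * q (D \<gamma>)" for \<gamma>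
    unfolding key eq lin ..
  have mqD: "mpoly_fun (\<lambda>\<gamma>. q (D \<gamma>))"
    unfolding D_def by (rule mpoly_subst[OF mq])
  show ?thesis
  proof (cases "\<mu> = (\<lambda>_. 0)")
    case False
    have "lin_pow_dvd ?S \<mu> m" unfolding lin_pow_dvd_def using mqD pq by blast
    moreover have "lin_pow_dvd ?S \<mu> 1"
    proof -
      have "mpoly_fun (\<lambda>\<gamma>. (\<Sum>b\<in>UNIV. \<mu> b * \<gamma> b) ^ (m - 1) * q (D \<gamma>))"
        by (intro mpoly_mult mpoly_power mpoly_sum mpoly_const mpoly_var mqD) simp_all
      moreover have "pencil_det ?S \<gamma> = (\<Sum>b\<in>UNIV. \<mu> b * \<gamma> b) ^ 1 * ((\<Sum>b\<in>UNIV. \<mu> b * \<gamma> b) ^ (m - 1) * q (D \<gamma>))" for \<gamma>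
      proof -
        have "(x::'a) ^ m = x ^ 1 * x ^ (m - 1)" for x using m0 by (cases m) auto
        then show ?thesis unfolding pq by (simp only: mult.assoc)
      qed
      ultimately show ?thesis unfolding lin_pow_dvd_def by blast
    qed
    ultimately show ?thesis using False by blast
  next
    case True
    have "pencil_det ?S \<gamma> = 0" for \<gamma> unfolding pq True using m0 by simp
    then have "lin_pow_dvd ?S (\<lambda>_. 1) k" for k
      unfolding lin_pow_dvd_def by (intro exI[of _ "\<lambda>_. 0"]) (simp add: mpoly_const)
    moreover have "(\<lambda>_::bool. 1::'a) \<noteq> (\<lambda>_. 0)" by (auto simp: fun_eq_iff)
    ultimately show ?thesis by blast
  qed
qed

end
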